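(* Let $k\ge 1$, $0\le r<k$ and $n\ge 1$ be integers, and let $$A_n(k,r,x)=\left(\binom{i-k+1+r}{j}x^k+\binom{i+1+r}{j+1}\right)_{i,j=0}^{n-1}.$$ Then $x^r\det A_n(k,r,x)=F^{(k)}_{kn+r}(x)$.
   Context: Binomial coefficients are the generalized ones: for an integer $m$ (possibly negative) and an integer $j$, $\binom{m}{j}=\frac{m(m-1)\cdots(m-j+1)}{j!}$ if $j\ge 0$ and $\binom{m}{j}=0$ if $j<0$. For an integer $k\ge1$, the generalized Fibonacci polynomials $F^{(k)}_n(x)\in\mathbb{Z}[x]$ ($n\ge0$) are defined by $F^{(k)}_n(x)=x^n$ for $0\le n<k$ and $F^{(k)}_n(x)=xF^{(k)}_{n-1}(x)+F^{(k)}_{n-k}(x)$ for $n\ge k$; equivalently $F^{(k)}_n(x)=\sum_{j=0}^{\lfloor n/k\rfloor}\binom{n-(k-1)j}{j}x^{n-kj}$. *)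

theory Defs
  imports "HOL-Computational_Algebra.Polynomial" "Jordan_Normal_Form.Determinant"
begin

text \<open>Generalized binomial coefficient binom(m,j) for an integer m and a natural j
  (j >= 0): m(m-1)...(m-j+1)/j!.  (The case j < 0 never arises in the statement,
  since all lower indices are j or j+1 with j a natural number.)\<close>
definition ibinom :: "int \<Rightarrow> nat \<Rightarrow> int" where
  "ibinom m j = (\<Prod>i<j. m - int i) div int (fact j)"

fun genfib :: "nat \<Rightarrow> nat \<Rightarrow> int poly" where
  "genfib k n = (if k = 0 then 0 else if n < k then monom 1 n
                 else [:0, 1:] * genfib k (n - 1) + genfib k (n - k))"

definition Amat :: "nat \<Rightarrow> nat \<Rightarrow> nat \<Rightarrow> int poly mat" where
  "Amat k r n = mat n n (\<lambda>(i, j).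
      [:ibinom (int i - int k + 1 + int r) j:] * monom 1 k
      + [:ibinom (int i + 1 + int r) (j + 1):])"

end

theory Submission
  imports Defs "HOL-Computational_Algebra.Formal_Power_Series"
begin


lemma ibinom_real: "real_of_int (ibinom m j) = (of_int m :: real) gchoose j"
proof -
  obtain N :: int where N: "(of_int m :: real) gchoose j = of_int N"
  proof (cases "m \<ge> 0")
    case True
    then obtain p where "m = int p" by (metis nonneg_eq_int)
    then show ?thesis using that[of "int (p choose j)"]
      by (simp add: binomial_gbinomial[symmetric])
  next
    case False
    have "(of_int m :: real) gchoose j = (-1)^j * ((of_nat j - of_int m - 1) gchoose j)"
      by (rule gbinomial_negated_upper)
    also have "(of_nat j - of_int m - 1 :: real) = of_nat (j + nat (-m) - 1)"
      using False by simp
    finally show ?thesis using that[of "(-1)^j * int ((j + nat (-m) - 1) choose j)"]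
      by (simp add: binomial_gbinomial[symmetric])
  qed
  have "real_of_int (\<Prod>i<j. m - int i) = (\<Prod>i = 0..<j. (of_int m :: real) - of_nat i)"
    by (simp add: atLeast0LessThan)
  also have "\<dots> = fact j * (of_int m gchoose j)" by (rule gbinomial_mult_fact[symmetric])
  also have "\<dots> = real_of_int (fact j * N)" using N by simp
  finally have "(\<Prod>i<j. m - int i) = fact j * N" by (simp only: of_int_eq_iff)
  then have "ibinom m j = N" unfolding ibinom_def by simp
  then show ?thesis using N by simp
qed

lemma ibinom_nat: "ibinom (int p) j = int (p choose j)"
proof -
  have "real_of_int (ibinom (int p) j) = real_of_int (int (p choose j))"
    by (simp add: ibinom_real binomial_gbinomial)
  then show ?thesis by (simp only: of_int_eq_iff)
qed

lemma ibinom_0[simp]: "ibinom m 0 = 1"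
  unfolding ibinom_def by simp

lemma ibinom_vandermonde:
  "(\<Sum>l\<in>{0..j}. ibinom a l * ibinom c (j - l)) = ibinom (a + c) j"
proof -
  have "real_of_int (\<Sum>l\<in>{0..j}. ibinom a l * ibinom c (j - l)) = real_of_int (ibinom (a + c) j)"
    by (simp add: ibinom_real gbinomial_Vandermonde)
  then show ?thesis by (simp only: of_int_eq_iff)
qed




definition Hm :: "(nat \<Rightarrow> 'a::comm_ring_1) \<Rightarrow> (nat \<Rightarrow> 'a) \<Rightarrow> nat \<Rightarrow> 'a mat" where
  "Hm v a n = mat n n (\<lambda>(l,j). if l = 0 then v j else if l \<le> j + 1 then a (j + 1 - l) else 0)"

lemma Hm_carrier[simp]: "Hm v a n \<in> carrier_mat n n"
  unfolding Hm_def by simp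

lemma Hm_one: "det (Hm v a (Suc 0)) = v 0"
  by (subst det_single) (auto simp: Hm_def)

lemma Hm_step:
  assumes a0: "a 0 = 1"
  shows "det (Hm v a (Suc (Suc n))) = v 0 * det (Hm (\<lambda>j. a (Suc j)) a (Suc n)) - det (Hm (\<lambda>j. v (Suc j)) a (Suc n))"
proof -
  let ?A = "Hm v a (Suc (Suc n))"
  have "det ?A = (\<Sum>i<Suc (Suc n). ?A $$ (i,0) * cofactor ?A i 0)"
    by (rule laplace_expansion_column) auto
  also have "\<dots> = ?A $$ (0,0) * cofactor ?A 0 0 + ?A $$ (1,0) * cofactor ?A 1 0
      + (\<Sum>i<n. ?A $$ (Suc (Suc i),0) * cofactor ?A (Suc (Suc i)) 0)"
    by (simp only: sum.lessThan_Suc_shift) (simp add: add.assoc)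
  also have "(\<Sum>i<n. ?A $$ (Suc (Suc i),0) * cofactor ?A (Suc (Suc i)) 0) = 0"
    by (rule sum.neutral) (auto simp: Hm_def)
  finally have e: "det ?A = ?A $$ (0,0) * cofactor ?A 0 0 + ?A $$ (1,0) * cofactor ?A 1 0" by simp
  have d1: "mat_delete ?A 0 0 = Hm (\<lambda>j. a (Suc j)) a (Suc n)"
    by (rule eq_matI) (auto simp: Hm_def mat_delete_def Suc_diff_le)
  have d2: "mat_delete ?A 1 0 = Hm (\<lambda>j. v (Suc j)) a (Suc n)"
    by (rule eq_matI) (auto simp: Hm_def mat_delete_def Suc_diff_le)
  show ?thesis using a0 unfolding e cofactor_def d1 d2 by (simp add: Hm_def)
qed

definition Dt :: "(nat \<Rightarrow> 'a::comm_ring_1) \<Rightarrow> nat \<Rightarrow> 'a" where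
  "Dt a p = det (Hm (\<lambda>j. a (Suc j)) a p)"

lemma Hm_closed:
  assumes a0: "a 0 = 1"
  shows "det (Hm v a (Suc n)) = (\<Sum>m\<le>n. (-1)^m * v m * Dt a (n - m))"
proof (induction n arbitrary: v)
  case 0
  have "Dt a 0 = 1" unfolding Dt_def by (simp add: Hm_def)
  then show ?case by (simp add: Hm_one)
next
  case (Suc n)
  have "det (Hm v a (Suc (Suc n))) = v 0 * Dt a (Suc n) - det (Hm (\<lambda>j. v (Suc j)) a (Suc n))"
    using Hm_step[of a, OF a0] unfolding Dt_def by simp
  also have "det (Hm (\<lambda>j. v (Suc j)) a (Suc n)) = (\<Sum>m\<le>n. (-1)^m * v (Suc m) * Dt a (n - m))"
    by (rule Suc.IH)
  finally show ?case
    by (simp only: sum.atMost_Suc_shift) (simp add: sum_negf[symmetric])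
qed

lemma Dt_rec:
  assumes a0: "a 0 = 1"
  shows "Dt a (Suc n) = (\<Sum>m\<le>n. (-1)^m * a (Suc m) * Dt a (n - m))"
  unfolding Dt_def[of a "Suc n"] by (rule Hm_closed[of a, OF a0])




declare genfib.simps[simp del]

lemma genfib_small: "k \<ge> 1 \<Longrightarrow> m < k \<Longrightarrow> genfib k m = monom 1 m"
  by (subst genfib.simps) simp

lemma genfib_big: "k \<ge> 1 \<Longrightarrow> m \<ge> k \<Longrightarrow> genfib k m = [:0,1:] * genfib k (m - 1) + genfib k (m - k)"
  by (subst genfib.simps) simp

definition Fz :: "nat \<Rightarrow> int \<Rightarrow> int poly" where
  "Fz k m = (if m < 0 then 0 else genfib k (nat m))"

lemma X_monom: "[:0,1:] * monom 1 s = (monom 1 (Suc s) :: int poly)"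
  by (simp add: monom_Suc)

lemma Fz_rec:
  assumes k: "k \<ge> 1" and m: "m \<noteq> 0"
  shows "Fz k m - Fz k (m - int k) = [:0,1:] * Fz k (m - 1)"
proof (cases "m < 0")
  case True then show ?thesis by (simp add: Fz_def)
next
  case False
  define p where "p = nat (m - 1)"
  have p: "m = int (Suc p)" using False m unfolding p_def by simp
  show ?thesis
  proof (cases "Suc p < k")
    case True
    have "nat (1 + int p) = Suc p" by simp
    then show ?thesis using k p True by (simp add: Fz_def genfib_small monom_Suc)
  next
    case False
    have "nat (int (Suc p) - int k) = Suc p - k" by simp
    moreover have "nat (1 + int p) = Suc p" by simp
    moreover have "genfib k (Suc p) = [:0,1:] * genfib k p + genfib k (Suc p - k)"
      using genfib_big[of k "Suc p"] k False by simp
    ultimately show ?thesis using k p False by (simp add: Fz_def)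
  qed
qed

lemma Hid:
  assumes k: "k \<ge> 1"
  shows "(\<forall>i j. i + j < s \<longrightarrow> int (k * i + j) \<noteq> m) \<Longrightarrow>
    (\<Sum>i\<le>s. (-1)^i * of_nat (s choose i) * Fz k (m - int (k * i))) = monom 1 s * Fz k (m - int s)"
proof (induction s arbitrary: m)
  case 0
  then show ?case by simp
next
  case (Suc s)
  let ?f = "\<lambda>s m. (\<Sum>i\<le>s. (-1)^i * of_nat (s choose i) * Fz k (m - int (k * i)) :: int poly)"
  have h1: "?f s m = monom 1 s * Fz k (m - int s)"
    using Suc.prems by (intro Suc.IH) auto
  have h2: "?f s (m - int k) = monom 1 s * Fz k (m - int k - int s)"
  proof (intro Suc.IH allI impI)
    fix i j assume "i + j < s"
    then have "int (k * Suc i + j) \<noteq> m" using Suc.prems[rule_format, of "Suc i" j] by auto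
    then show "int (k * i + j) \<noteq> m - int k" by (simp add: algebra_simps)
  qed
  have ms: "m - int s \<noteq> 0" using Suc.prems[rule_format, of 0 s] by auto
  have "?f (Suc s) m = (\<Sum>i\<le>Suc s. (-1)^i * of_nat (s choose i) * Fz k (m - int (k * i)))
      + (\<Sum>i\<le>Suc s. (-1)^i * of_nat (if i = 0 then 0 else s choose (i - 1)) * Fz k (m - int (k * i)))"
  proof -
    have pas: "(of_nat (Suc s choose i) :: int poly) = of_nat (s choose i) + of_nat (if i = 0 then 0 else s choose (i - 1))" for i
      by (cases i) simp_all
    show ?thesis unfolding sum.distrib[symmetric]
      by (rule sum.cong) (simp_all only: pas distrib_left distrib_right)
  qed
  also have "(\<Sum>i\<le>Suc s. (-1)^i * of_nat (s choose i) * Fz k (m - int (k * i))) = ?f s m"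
    by (simp add: sum.atMost_Suc)
  also have "(\<Sum>i\<le>Suc s. (-1)^i * of_nat (if i = 0 then 0 else s choose (i - 1)) * Fz k (m - int (k * i)))
      = - ?f s (m - int k)"
    by (simp only: sum.atMost_Suc_shift) (simp add: sum_negf[symmetric] algebra_simps)
  finally have "?f (Suc s) m = monom 1 s * (Fz k (m - int s) - Fz k (m - int s - int k))"
    using h1 h2 by (simp add: algebra_simps)
  also have "Fz k (m - int s) - Fz k (m - int s - int k) = [:0,1:] * Fz k (m - int s - 1)"
    by (rule Fz_rec[OF k ms])
  finally have "?f (Suc s) m = monom 1 s * ([:0,1:] * Fz k (m - int s - 1))" .
  also have "\<dots> = ([:0,1:] * monom 1 s) * Fz k (m - int s - 1)" by (simp only: ac_simps)
  also have "\<dots> = monom 1 (Suc s) * Fz k (m - int (Suc s))" by (simp only: X_monom) (simp add: algebra_simps)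
  finally show ?case .
qed




lemma Fz_nat: "Fz k (int p) = genfib k p" by (simp add: Fz_def)

lemma conv:
  assumes k: "k \<ge> 1" and c: "c < k"
  shows "(\<Sum>i\<le>s. (-1)^i * of_nat (s choose i) * Fz k (int (k*q + c) - int (k*i)))
       = (\<Sum>i\<le>q. (-1)^i * of_nat (s choose i) * genfib k (k*(q-i) + c))"
proof -
  let ?f = "\<lambda>i. (-1)^i * of_nat (s choose i) * Fz k (int (k*q + c) - int (k*i)) :: int poly"
  have "(\<Sum>i\<le>s. ?f i) = (\<Sum>i\<le>s+q. ?f i)"
    by (rule sum.mono_neutral_left) auto
  also have "\<dots> = (\<Sum>i\<le>q. ?f i)"
  proof (rule sum.mono_neutral_right)
    show "\<forall>i\<in>{..s + q} - {..q}. ?f i = 0"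
    proof
      fix i assume "i \<in> {..s + q} - {..q}"
      then have "q + 1 \<le> i" by auto
      then have "k * (q+1) \<le> k * i" by (rule mult_le_mono2)
      then have "k*q + c < k*i" using c by simp
      then have "int (k*q + c) - int (k*i) < 0" by linarith
      then show "?f i = 0" by (simp add: Fz_def)
    qed
  qed auto
  also have "\<dots> = (\<Sum>i\<le>q. (-1)^i * of_nat (s choose i) * genfib k (k*(q-i) + c))"
  proof (rule sum.cong)
    fix i assume "i \<in> {..q}"
    then have "k * i \<le> k * q" by simp
    then have e1: "k*q + c - k*i = k*(q-i) + c" by (simp add: diff_mult_distrib2)
    have "int (k*q + c) - int (k*i) = int (k*q + c - k*i)"
      using \<open>k * i \<le> k * q\<close> by (intro of_nat_diff[symmetric]) linarith
    then have "int (k*q + c) - int (k*i) = int (k*(q-i) + c)" using e1 by simp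
    then show "?f i = (-1)^i * of_nat (s choose i) * genfib k (k*(q-i) + c)"
      by (simp only: Fz_nat)
  qed simp
  finally show ?thesis .
qed

lemma modk:
  fixes k i j q :: nat
  assumes k: "k \<ge> 1" and j: "j < k" and e: "k * i + j = k * q + (k - 1)"
  shows "j = k - 1"
proof -
  have "(k * i + j) mod k = (k * q + (k - 1)) mod k" using e by simp
  then have "j mod k = (k - 1) mod k" by simp
  then show ?thesis using j k by simp
qed

definition G :: "nat \<Rightarrow> nat \<Rightarrow> int poly" where
  "G k p = genfib k (k * p + (k - 1))"

lemma R1:
  assumes k: "k \<ge> 1"
  shows "G k (Suc n) = (\<Sum>m\<le>n. (-1)^m * (of_nat (k choose Suc m) + (if m = 0 then monom 1 k else 0)) * G k (n - m))"
proof -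
  have cond: "\<forall>i j. i + j < k \<longrightarrow> int (k * i + j) \<noteq> int (k * Suc n + (k - 1))"
  proof (intro allI impI notI)
    fix i j assume ij: "i + j < k" and e: "int (k * i + j) = int (k * Suc n + (k - 1))"
    then have e': "k * i + j = k * Suc n + (k - 1)" by (simp only: of_nat_eq_iff)
    have "j = k - 1" using modk[OF k _ e'] ij by simp
    then have "i = 0" using ij by simp
    then show False using e' \<open>j = k - 1\<close> k by simp
  qed
  have "(\<Sum>i\<le>k. (-1)^i * of_nat (k choose i) * Fz k (int (k * Suc n + (k - 1)) - int (k * i)))
        = monom 1 k * Fz k (int (k * Suc n + (k - 1)) - int k)"
    by (rule Hid[OF k cond])
  also have "int (k * Suc n + (k - 1)) - int k = int (k * n + (k - 1))" by simp
  also have "Fz k (int (k * n + (k - 1))) = G k n" by (simp only: Fz_nat G_def)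
  finally have h0: "(\<Sum>i\<le>k. (-1)^i * of_nat (k choose i) * Fz k (int (k * Suc n + (k - 1)) - int (k * i))) = monom 1 k * G k n" .
  have "(\<Sum>i\<le>k. (-1)^i * of_nat (k choose i) * Fz k (int (k * Suc n + (k - 1)) - int (k * i)))
     = (\<Sum>i\<le>Suc n. (-1)^i * of_nat (k choose i) * genfib k (k*(Suc n-i) + (k - 1)))"
    by (rule conv) (use k in auto)
  then have h: "(\<Sum>i\<le>Suc n. (-1)^i * of_nat (k choose i) * G k (Suc n - i)) = monom 1 k * G k n"
    using h0 by (simp only: G_def)
  have h2: "(\<Sum>i\<le>Suc n. (-1)^i * of_nat (k choose i) * G k (Suc n - i))
     = G k (Suc n) - (\<Sum>m\<le>n. (-1)^m * of_nat (k choose Suc m) * G k (n - m))"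
    by (simp only: sum.atMost_Suc_shift) (simp add: sum_negf[symmetric])
  have h3: "(\<Sum>m\<le>n. (-1)^m * (of_nat (k choose Suc m) + (if m = 0 then monom 1 k else 0)) * G k (n - m))
     = (\<Sum>m\<le>n. (-1)^m * of_nat (k choose Suc m) * G k (n - m)) + (\<Sum>m\<le>n. (if m = 0 then monom 1 k * G k n else 0))"
    unfolding sum.distrib[symmetric] by (rule sum.cong) (auto simp: algebra_simps)
  have h4: "(\<Sum>m\<le>n. (if m = 0 then monom 1 k * G k n else 0)) = monom 1 k * G k n"
    by (simp add: sum.delta)
  show ?thesis using h h2 h3 h4 by (simp add: algebra_simps)
qed

lemma R2:
  assumes k: "k \<ge> 1" and r: "r < k"
  shows "monom 1 (k - r - 1) * genfib k (k * Suc n + r)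
     = G k (Suc n) - (\<Sum>m\<le>n. (-1)^m * of_nat ((k - r - 1) choose Suc m) * G k (n - m))"
proof -
  let ?b = "k - r - 1"
  have cond: "\<forall>i j. i + j < ?b \<longrightarrow> int (k * i + j) \<noteq> int (k * Suc n + (k - 1))"
  proof (intro allI impI notI)
    fix i j assume ij: "i + j < ?b" and e: "int (k * i + j) = int (k * Suc n + (k - 1))"
    then have e': "k * i + j = k * Suc n + (k - 1)" by (simp only: of_nat_eq_iff)
    have "j = k - 1" using modk[OF k _ e'] ij by simp
    then show False using ij by simp
  qed
  have "(\<Sum>i\<le>?b. (-1)^i * of_nat (?b choose i) * Fz k (int (k * Suc n + (k - 1)) - int (k * i)))
        = monom 1 ?b * Fz k (int (k * Suc n + (k - 1)) - int ?b)"
    by (rule Hid[OF k cond])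
  also have "int (k * Suc n + (k - 1)) - int ?b = int (k * Suc n + r)" using r by simp
  also have "Fz k (int (k * Suc n + r)) = genfib k (k * Suc n + r)" by (simp only: Fz_nat)
  finally have h0: "(\<Sum>i\<le>?b. (-1)^i * of_nat (?b choose i) * Fz k (int (k * Suc n + (k - 1)) - int (k * i))) = monom 1 ?b * genfib k (k * Suc n + r)" .
  have "(\<Sum>i\<le>?b. (-1)^i * of_nat (?b choose i) * Fz k (int (k * Suc n + (k - 1)) - int (k * i)))
     = (\<Sum>i\<le>Suc n. (-1)^i * of_nat (?b choose i) * genfib k (k*(Suc n-i) + (k - 1)))"
    by (rule conv) (use k in auto)
  then have h: "(\<Sum>i\<le>Suc n. (-1)^i * of_nat (?b choose i) * G k (Suc n - i)) = monom 1 ?b * genfib k (k * Suc n + r)"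
    using h0 by (simp only: G_def)
  have h2: "(\<Sum>i\<le>Suc n. (-1)^i * of_nat (?b choose i) * G k (Suc n - i))
     = G k (Suc n) - (\<Sum>m\<le>n. (-1)^m * of_nat (?b choose Suc m) * G k (n - m))"
    by (simp only: sum.atMost_Suc_shift) (simp add: sum_negf[symmetric])
  show ?thesis using h h2 by simp
qed




lemma lincomb_r:
  "(\<Sum>l\<in>S. (of_int (f l) * X + of_int (g l)) * of_int (h l)) =
   of_int (\<Sum>l\<in>S. f l * h l) * X + (of_int (\<Sum>l\<in>S. g l * h l) :: 'a::comm_ring_1)"
  by (simp add: sum.distrib algebra_simps sum_distrib_left sum_distrib_right)

lemma lincomb_l:
  "(\<Sum>l\<in>S. of_int (h l) * (of_int (f l) * X + of_int (g l))) =
   of_int (\<Sum>l\<in>S. h l * f l) * X + (of_int (\<Sum>l\<in>S. h l * g l) :: 'a::comm_ring_1)"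
  by (simp add: sum.distrib algebra_simps sum_distrib_left sum_distrib_right)

lemma trunc_sum:
  fixes n J :: nat
  assumes "\<And>l. n \<le> l \<Longrightarrow> l \<le> J \<Longrightarrow> f l = 0"
  shows "(\<Sum>l\<in>{0..<n}. f l * (if l \<le> J then g l else 0)) = (\<Sum>l\<in>{0..J}. f l * g l :: 'a::comm_ring_1)"
proof -
  have "(\<Sum>l\<in>{0..<n}. f l * (if l \<le> J then g l else 0)) = (\<Sum>l\<in>{0..<n}. if l \<le> J then f l * g l else 0)"
    by (rule sum.cong) auto
  also have "\<dots> = (\<Sum>l\<in>{l\<in>{0..<n}. l \<le> J}. f l * g l)"
    by (rule sum.inter_filter[symmetric]) simp
  also have "\<dots> = (\<Sum>l\<in>{0..J}. f l * g l)"
    by (rule sum.mono_neutral_left) (auto, metis assms mult_zero_left not_less)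
  finally show ?thesis .
qed

lemma const_of_int: "[:c:] = (of_int c :: int poly)"
  by (simp add: of_int_poly)




lemma mat_mult_entry:
  assumes "i < n" "j < n"
  shows "(mat n n f * mat n n g) $$ (i,j) = (\<Sum>l\<in>{0..<n}. f (i,l) * g (l,j))"
  using assms by (auto simp: scalar_prod_def intro: sum.cong)

definition av :: "nat \<Rightarrow> nat \<Rightarrow> int poly" where
  "av k d = of_nat (k choose d) + (if d = 1 then monom 1 k else 0)"

definition vv :: "nat \<Rightarrow> nat \<Rightarrow> nat \<Rightarrow> int poly" where
  "vv k r j = av k (Suc j) - of_nat ((k - r - 1) choose Suc j)"

definition Tm :: "nat \<Rightarrow> nat \<Rightarrow> nat \<Rightarrow> int poly mat" where
  "Tm k r n = mat n n (\<lambda>(l,j). of_int (if l \<le> j then int ((k - r - 1) choose (j - l)) else 0))"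

definition Pm :: "nat \<Rightarrow> int poly mat" where
  "Pm n = mat n n (\<lambda>(i,l). of_int (int (i choose l)))"

definition mu :: "nat \<Rightarrow> nat \<Rightarrow> int" where "mu l j = (if l = j then 1 else 0)"
definition nu :: "nat \<Rightarrow> nat \<Rightarrow> nat \<Rightarrow> nat \<Rightarrow> int" where
  "nu k r l j = (if l \<le> j + 1 then int (k choose (j + 1 - l)) else 0) - (if l = 0 then int ((k - r - 1) choose (j + 1)) else 0)"

lemma M_form: "Hm (vv k r) (av k) n = mat n n (\<lambda>(l,j). of_int (mu l j) * monom 1 k + of_int (nu k r l j))"
  by (rule eq_matI) (auto simp: Hm_def vv_def av_def mu_def nu_def)

lemma A_form: "Amat k r n = mat n n (\<lambda>(i,l). of_int (ibinom (int i - int k + 1 + int r) l) * monom 1 k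
     + of_int (ibinom (int i + 1 + int r) (l+1)))"
  unfolding Amat_def const_of_int by simp

lemma det_T: "det (Tm k r n) = 1"
proof -
  have "det (Tm k r n) = prod_list (diag_mat (Tm k r n))"
    by (rule det_upper_triangular) (auto simp: Tm_def upper_triangular_def)
  also have "\<dots> = (\<Prod>i = 0..<n. Tm k r n $$ (i,i))"
    by (simp add: prod_list_diag_prod Tm_def)
  also have "\<dots> = 1" by (rule prod.neutral) (simp add: Tm_def)
  finally show ?thesis .
qed

lemma det_P: "det (Pm n) = 1"
proof -
  have "det (Pm n) = prod_list (diag_mat (Pm n))"
    by (rule det_lower_triangular[of n]) (auto simp: Pm_def)
  also have "\<dots> = (\<Prod>i = 0..<n. Pm n $$ (i,i))"
    by (simp add: prod_list_diag_prod Pm_def)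
  also have "\<dots> = 1" by (rule prod.neutral) (simp add: Pm_def)
  finally show ?thesis .
qed




lemma alpha_sum:
  assumes r: "r < k"
  shows "(\<Sum>l\<in>{0..j}. ibinom (int i - int k + 1 + int r) l * int ((k - r - 1) choose (j - l))) = int (i choose j)"
proof -
  have "(\<Sum>l\<in>{0..j}. ibinom (int i - int k + 1 + int r) l * int ((k - r - 1) choose (j - l)))
      = (\<Sum>l\<in>{0..j}. ibinom (int i - int k + 1 + int r) l * ibinom (int (k - r - 1)) (j - l))"
    by (simp add: ibinom_nat)
  also have "\<dots> = ibinom (int i - int k + 1 + int r + int (k - r - 1)) j"
    by (rule ibinom_vandermonde)
  also have "int i - int k + 1 + int r + int (k - r - 1) = int i" using r by simp
  finally show ?thesis by (simp add: ibinom_nat)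
qed

lemma beta_sum:
  assumes r: "r < k"
  shows "(\<Sum>l\<in>{0..j}. ibinom (int i + 1 + int r) (l + 1) * int ((k - r - 1) choose (j - l)))
     = int ((i + k) choose Suc j) - int ((k - r - 1) choose Suc j)"
proof -
  let ?c = "int i + 1 + int r"
  have "(\<Sum>l\<in>{0..Suc j}. ibinom ?c l * ibinom (int (k - r - 1)) (Suc j - l)) = ibinom (?c + int (k - r - 1)) (Suc j)"
    by (rule ibinom_vandermonde)
  also have "?c + int (k - r - 1) = int (i + k)" using r by simp
  finally have e: "(\<Sum>l\<in>{0..Suc j}. ibinom ?c l * ibinom (int (k - r - 1)) (Suc j - l)) = int ((i + k) choose Suc j)"
    unfolding ibinom_nat .
  have "(\<Sum>l\<in>{0..Suc j}. ibinom ?c l * ibinom (int (k - r - 1)) (Suc j - l))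
     = int ((k - r - 1) choose Suc j) + (\<Sum>l\<in>{0..j}. ibinom ?c (Suc l) * ibinom (int (k - r - 1)) (Suc j - Suc l))"
    by (subst sum.atLeast0_atMost_Suc_shift) (simp add: ibinom_nat)
  then show ?thesis using e by (simp add: ibinom_nat)
qed

lemma mat_eq:
  assumes r: "r < k"
  shows "Amat k r n * Tm k r n = Pm n * Hm (vv k r) (av k) n"
proof (rule eq_matI)
  fix i j assume i: "i < dim_row (Pm n * Hm (vv k r) (av k) n)" and j: "j < dim_col (Pm n * Hm (vv k r) (av k) n)"
  then have i: "i < n" and j: "j < n" by (auto simp: Pm_def Hm_def)
  let ?X = "monom 1 k :: int poly"
  have "(Amat k r n * Tm k r n) $$ (i,j) = (\<Sum>l\<in>{0..<n}.
      (of_int (ibinom (int i - int k + 1 + int r) l) * ?X + of_int (ibinom (int i + 1 + int r) (l+1)))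
      * of_int (if l \<le> j then int ((k - r - 1) choose (j - l)) else 0))"
    unfolding A_form Tm_def by (subst mat_mult_entry[OF i j]) simp
  also have "\<dots> = of_int (int (i choose j)) * ?X + of_int (int ((i + k) choose Suc j) - int ((k - r - 1) choose Suc j))"
  proof -
    have t1: "(\<Sum>l\<in>{0..<n}. ibinom (int i - int k + 1 + int r) l * (if l \<le> j then int ((k - r - 1) choose (j - l)) else 0))
      = (\<Sum>l\<in>{0..j}. ibinom (int i - int k + 1 + int r) l * int ((k - r - 1) choose (j - l)))"
      by (rule trunc_sum) (use j in simp)
    have t2: "(\<Sum>l\<in>{0..<n}. ibinom (int i + 1 + int r) (l + 1) * (if l \<le> j then int ((k - r - 1) choose (j - l)) else 0))
      = (\<Sum>l\<in>{0..j}. ibinom (int i + 1 + int r) (l + 1) * int ((k - r - 1) choose (j - l)))"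
      by (rule trunc_sum) (use j in simp)
    show ?thesis unfolding lincomb_r t1 t2 alpha_sum[OF r] beta_sum[OF r] ..
  qed
  finally have L: "(Amat k r n * Tm k r n) $$ (i,j) = \<dots>" .
  have "(Pm n * Hm (vv k r) (av k) n) $$ (i,j) = (\<Sum>l\<in>{0..<n}.
      of_int (int (i choose l)) * (of_int (mu l j) * ?X + of_int (nu k r l j)))"
    unfolding M_form Pm_def by (subst mat_mult_entry[OF i j]) simp
  also have "\<dots> = of_int (\<Sum>l\<in>{0..<n}. int (i choose l) * mu l j) * ?X + of_int (\<Sum>l\<in>{0..<n}. int (i choose l) * nu k r l j)"
    by (rule lincomb_l)
  also have "(\<Sum>l\<in>{0..<n}. int (i choose l) * mu l j) = int (i choose j)"
  proof -
    have "(\<Sum>l\<in>{0..<n}. int (i choose l) * mu l j) = (\<Sum>l\<in>{0..<n}. if l = j then int (i choose l) else 0)"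
      by (rule sum.cong) (auto simp: mu_def)
    also have "\<dots> = int (i choose j)" using j by (simp add: sum.delta')
    finally show ?thesis .
  qed
  also have "(\<Sum>l\<in>{0..<n}. int (i choose l) * nu k r l j)
      = (\<Sum>l\<in>{0..<n}. int (i choose l) * (if l \<le> j + 1 then int (k choose (j + 1 - l)) else 0))
        - (\<Sum>l\<in>{0..<n}. int (i choose l) * (if l = 0 then int ((k - r - 1) choose (j + 1)) else 0))"
    unfolding nu_def by (simp add: sum_subtractf[symmetric] algebra_simps)
  also have "(\<Sum>l\<in>{0..<n}. int (i choose l) * (if l = 0 then int ((k - r - 1) choose (j + 1)) else 0))
      = int ((k - r - 1) choose (j + 1))"
  proof -
    have "(\<Sum>l\<in>{0..<n}. int (i choose l) * (if l = 0 then int ((k - r - 1) choose (j + 1)) else 0))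
       = (\<Sum>l\<in>{0..<n}. if l = 0 then int ((k - r - 1) choose (j + 1)) else 0)"
      by (rule sum.cong) auto
    also have "\<dots> = int ((k - r - 1) choose (j + 1))" using i by (simp add: sum.delta')
    finally show ?thesis .
  qed
  also have "(\<Sum>l\<in>{0..<n}. int (i choose l) * (if l \<le> j + 1 then int (k choose (j + 1 - l)) else 0))
      = (\<Sum>l\<in>{0..j+1}. int (i choose l) * int (k choose (j + 1 - l)))"
    by (rule trunc_sum) (use i in simp)
  also have "\<dots> = int ((i + k) choose (j + 1))"
    by (simp only: of_nat_mult[symmetric] of_nat_sum[symmetric] binomial_Vandermonde)
  finally show "(Amat k r n * Tm k r n) $$ (i,j) = (Pm n * Hm (vv k r) (av k) n) $$ (i,j)"
    using L by simp
qed (auto simp: Amat_def Tm_def Pm_def Hm_def)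




lemma detA: assumes r: "r < k" shows "det (Amat k r n) = det (Hm (vv k r) (av k) n)"
proof -
  have c1: "Amat k r n \<in> carrier_mat n n" "Tm k r n \<in> carrier_mat n n" "Pm n \<in> carrier_mat n n"
    by (auto simp: Amat_def Tm_def Pm_def)
  have "det (Amat k r n) = det (Amat k r n * Tm k r n)"
    using det_mult[OF c1(1,2)] det_T by simp
  also have "\<dots> = det (Pm n * Hm (vv k r) (av k) n)" by (simp only: mat_eq[OF r])
  also have "\<dots> = det (Hm (vv k r) (av k) n)"
    using det_mult[OF c1(3) Hm_carrier] det_P by simp
  finally show ?thesis .
qed

lemma av0: "av k 0 = 1" by (simp add: av_def)

lemma av_Suc: "av k (Suc m) = of_nat (k choose Suc m) + (if m = 0 then monom 1 k else 0)"
  by (simp add: av_def)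

lemma Dt_G: assumes k: "k \<ge> 1" shows "monom 1 (k - 1) * Dt (av k) p = G k p"
proof (induction p rule: less_induct)
  case (less p)
  show ?case
  proof (cases p)
    case 0
    have "Dt (av k) 0 = 1" by (simp add: Dt_def Hm_def)
    then show ?thesis using 0 k by (simp add: G_def genfib_small)
  next
    case (Suc n)
    have "monom 1 (k - 1) * Dt (av k) (Suc n) = (\<Sum>m\<le>n. (-1)^m * av k (Suc m) * (monom 1 (k - 1) * Dt (av k) (n - m)))"
      unfolding Dt_rec[of "av k", OF av0] by (simp add: sum_distrib_left algebra_simps)
    also have "\<dots> = (\<Sum>m\<le>n. (-1)^m * av k (Suc m) * G k (n - m))"
      by (rule sum.cong) (use Suc less.IH in auto)
    also have "\<dots> = G k (Suc n)" unfolding av_Suc by (rule R1[OF k, symmetric])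
    finally show ?thesis using Suc by simp
  qed
qed

lemma main:
  fixes k r n :: nat
  assumes k: "k \<ge> 1" and r: "r < k" and n: "n \<ge> 1"
  shows "monom 1 r * det (Amat k r n) = genfib k (k * n + r)"
proof -
  obtain n' where n': "n = Suc n'" using n by (cases n) auto
  let ?b = "k - r - 1"
  have "monom 1 (k - 1) * det (Amat k r n) = (\<Sum>m\<le>n'. (-1)^m * vv k r m * (monom 1 (k - 1) * Dt (av k) (n' - m)))"
    unfolding detA[OF r] n' Hm_closed[of "av k", OF av0] by (simp add: sum_distrib_left algebra_simps)
  also have "\<dots> = (\<Sum>m\<le>n'. (-1)^m * vv k r m * G k (n' - m))"
    by (simp only: Dt_G[OF k])
  also have "\<dots> = (\<Sum>m\<le>n'. (-1)^m * av k (Suc m) * G k (n' - m)) - (\<Sum>m\<le>n'. (-1)^m * of_nat (?b choose Suc m) * G k (n' - m))"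
    unfolding vv_def by (simp add: sum_subtractf[symmetric] algebra_simps)
  also have "(\<Sum>m\<le>n'. (-1)^m * av k (Suc m) * G k (n' - m)) = G k (Suc n')"
    unfolding av_Suc by (rule R1[OF k, symmetric])
  also have "G k (Suc n') - (\<Sum>m\<le>n'. (-1)^m * of_nat (?b choose Suc m) * G k (n' - m)) = monom 1 ?b * genfib k (k * n + r)"
    unfolding n' by (rule R2[OF k r, symmetric])
  finally have e: "monom 1 (k - 1) * det (Amat k r n) = monom 1 ?b * genfib k (k * n + r)" .
  have "monom 1 (k - 1) = (monom 1 ?b * monom 1 r :: int poly)"
    using r by (simp add: mult_monom)
  then have "monom 1 ?b * (monom 1 r * det (Amat k r n)) = monom 1 ?b * genfib k (k * n + r)"
    using e by (simp add: mult.assoc)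
  moreover have "monom 1 ?b \<noteq> (0 :: int poly)" by simp
  ultimately show ?thesis by simp
qed


theorem theorem1:
  fixes k r n :: nat
  assumes "k \<ge> 1" and "r < k" and "n \<ge> 1"
  shows "monom 1 r * det (Amat k r n) = genfib k (k * n + r)"
  using assms by (rule main)

end
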